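(* Let $A=[a_1,\dots,a_N]\in\mathbb{C}^{n\times N}$ be a random matrix with i.i.d. entries distributed as $N(0,1)+iN(0,1)$, let $x_0\in\mathbb{C}^n$ with $\|x_0\|=1$, and $b(j)=|a_j^*x_0|$, $j=1,\dots,N$. Let $I\subset\{1,\dots,N\}$ with complement $I_c$ be such that $b(i)\le b(j)$ for all $i\in I$, $j\in I_c$, let $A_I$ be the submatrix of $A$ with columns $\{a_i\}_{i\in I}$, $b_I=(b(i))_{i\in I}$, and let $x_{\rm null}\in\arg\min\{\|A_I^*x\|^2:x\in\mathbb{C}^n,\ \|x\|=\|x_0\|\}$. Then there exists $x_\perp\in\mathbb{C}^n$ with $x_\perp^*x_0=0$ and $\|x_\perp\|=\|x_0\|=1$ such that \[ \frac14\|x_0x_0^*-x_{\rm null}x_{\rm null}^*\|^2\le\frac{\|b_I\|^2}{\|A_I^*x_\perp\|^2}. \]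
   Context: $\|\cdot\|$ is the Euclidean norm on vectors and the Frobenius norm on matrices; $A^*$ denotes conjugate transpose. $x_{\rm null}$ is a least singular vector of $A_I^*$ (defined up to a global phase); the left-hand side does not depend on this phase. *)

theory Defs
  imports "HOL-Probability.Probability"
begin

definition cdot :: "complex^'n \<Rightarrow> complex^'n \<Rightarrow> complex" where
  "cdot a x = (\<Sum>k\<in>UNIV. cnj (a $ k) * x $ k)"

definition frob_diff :: "complex^'n \<Rightarrow> complex^'n \<Rightarrow> real" where
  "frob_diff x y = sqrt (\<Sum>k\<in>UNIV. \<Sum>l\<in>UNIV.
      (cmod (x $ k * cnj (x $ l) - y $ k * cnj (y $ l)))\<^sup>2)"

text \<open>Sample space: independent standard real Gaussians indexed by
  (column j < N, row k, real/imaginary part).\<close>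
definition gauss_space :: "nat \<Rightarrow> (nat \<times> 'n \<times> bool \<Rightarrow> real) measure" where
  "gauss_space N = PiM ({..<N} \<times> (UNIV :: 'n set) \<times> (UNIV :: bool set))
                     (\<lambda>_. density lborel std_normal_density)"

definition col :: "(nat \<times> 'n \<times> bool \<Rightarrow> real) \<Rightarrow> nat \<Rightarrow> complex^'n" where
  "col \<omega> j = (\<chi> k. Complex (\<omega> (j, k, True)) (\<omega> (j, k, False)))"

definition bvec :: "(nat \<times> 'n \<times> bool \<Rightarrow> real) \<Rightarrow> complex^'n \<Rightarrow> nat \<Rightarrow> real" where
  "bvec \<omega> x0 j = cmod (cdot (col \<omega> j) x0)"

definition AIx_sq :: "(nat \<times> 'n \<times> bool \<Rightarrow> real) \<Rightarrow> nat set \<Rightarrow> complex^'n \<Rightarrow> real" where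
  "AIx_sq \<omega> I x = (\<Sum>i\<in>I. (cmod (cdot (col \<omega> i) x))\<^sup>2)"

end

theory Submission
  imports Defs
begin


lemma null_coord_eq:
  fixes J :: "'i set" and i0 :: 'i and g :: "('i \<Rightarrow> real) \<Rightarrow> real"
  assumes fin: "finite J" and i0: "i0 \<in> J"
    and gm: "g \<in> borel_measurable (PiM J (\<lambda>_. density lborel std_normal_density))"
    and gi: "\<And>w y. g (w(i0 := y)) = g w"
  shows "AE w in PiM J (\<lambda>_. density lborel std_normal_density). w i0 \<noteq> g w"
proof -
  define D where "D = density lborel std_normal_density"
  have ps: "prob_space D" unfolding D_def by (rule prob_space_normal_density) simp
  interpret product_sigma_finite "\<lambda>_. D"
    unfolding product_sigma_finite_def using ps prob_space_imp_sigma_finite by blast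
  define B where "B = {w \<in> space (PiM J (\<lambda>_. D)). w i0 = g w}"
  have gm': "g \<in> borel_measurable (PiM J (\<lambda>_. D))" using gm unfolding D_def .
  have c: "(\<lambda>x. x i0) \<in> borel_measurable (PiM J (\<lambda>_. D))"
    using measurable_component_singleton[OF i0, of "\<lambda>_. D"]
    unfolding D_def by (simp add: measurable_cong_sets[OF refl sets_density])
  have Bs: "B \<in> sets (PiM J (\<lambda>_. D))" unfolding B_def
    by (rule borel_measurable_eq[OF c gm'])
  have J: "J = insert i0 (J - {i0})" using i0 by auto
  have "emeasure (PiM J (\<lambda>_. D)) B = (\<integral>\<^sup>+ w. indicator B w \<partial>PiM J (\<lambda>_. D))"
    using Bs by simp
  also have "\<dots> = (\<integral>\<^sup>+ x. (\<integral>\<^sup>+ y. indicator B (x(i0 := y)) \<partial>D) \<partial>PiM (J - {i0}) (\<lambda>_. D))"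
    apply (subst J)
    apply (rule product_nn_integral_insert)
    using fin Bs J by (auto simp del: insert_Diff_single)
  also have "\<dots> \<le> (\<integral>\<^sup>+ x. 0 \<partial>PiM (J - {i0}) (\<lambda>_. D))"
  proof (rule nn_integral_mono)
    fix x
    have "(\<integral>\<^sup>+ y. indicator B (x(i0 := y)) \<partial>D) \<le> (\<integral>\<^sup>+ y. indicator {g x} y \<partial>D)"
      by (rule nn_integral_mono) (auto simp: B_def indicator_def gi)
    also have "\<dots> = emeasure D {g x}" by (simp add: D_def)
    also have "\<dots> = 0" unfolding D_def
      by (subst emeasure_density) (auto intro!: nn_integral_null_set)
    finally show "(\<integral>\<^sup>+ y. indicator B (x(i0 := y)) \<partial>D) \<le> 0" by simp
  qed
  finally have "emeasure (PiM J (\<lambda>_. D)) B = 0" by simp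
  hence "B \<in> null_sets (PiM J (\<lambda>_. D))" using Bs by auto
  hence "AE w in PiM J (\<lambda>_. D). w i0 \<noteq> g w"
    by (rule AE_I') (auto simp: B_def)
  thus ?thesis unfolding D_def .
qed

lemma gauss_space_eq: "gauss_space N = PiM ({..<N} \<times> (UNIV :: 'n::finite set) \<times> (UNIV :: bool set))
                     (\<lambda>_. density lborel std_normal_density)"
  by (simp add: gauss_space_def)

lemma comp_meas:
  assumes "j < N"
  shows "(\<lambda>x. x (j, k::'n::finite, b)) \<in> borel_measurable (gauss_space N :: (nat \<times> 'n \<times> bool \<Rightarrow> real) measure)"
proof -
  have i0: "(j,k,b) \<in> {..<N} \<times> (UNIV :: 'n set) \<times> (UNIV :: bool set)" using assms by auto
  show ?thesis unfolding gauss_space_def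
    using measurable_component_singleton[OF i0, of "\<lambda>_. density lborel std_normal_density"]
    by (simp add: measurable_cong_sets[OF refl sets_density])
qed

lemma AE_cdot_nonzero:
  fixes w :: "complex^'n" and N j :: nat
  assumes wne: "w \<noteq> 0" and j: "j < N"
  shows "AE x in (gauss_space N :: (nat \<times> 'n \<times> bool \<Rightarrow> real) measure). cdot (col x j) w \<noteq> 0"
proof -
  obtain k0 where k0: "w $ k0 \<noteq> 0" using wne by (metis vec_eq_iff zero_index)
  define i0 where "i0 = (j, k0, True)"
  define T where "T x = (\<Sum>k\<in>UNIV - {k0}. (of_real (x (j, k, True)) - \<i> * of_real (x (j, k, False))) * w $ k)
       + (- \<i> * of_real (x (j, k0, False))) * w $ k0" for x :: "nat \<times> 'n \<times> bool \<Rightarrow> real"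
  define g where "g x = Re (- T x / w $ k0)" for x
  have [measurable]: "\<And>k b. (\<lambda>x. x (j, k, b)) \<in> borel_measurable (gauss_space N :: (nat \<times> 'n \<times> bool \<Rightarrow> real) measure)"
    using comp_meas[OF j] by blast
  have gm: "g \<in> borel_measurable (gauss_space N :: (nat \<times> 'n \<times> bool \<Rightarrow> real) measure)"
    unfolding g_def T_def by measurable
  have gi: "g (x(i0 := y)) = g x" for x y
  proof -
    have "T (x(i0 := y)) = T x" unfolding T_def col_def i0_def
      by (intro arg_cong2[where f="(+)"] sum.cong) auto
    thus ?thesis by (simp add: g_def)
  qed
  have "AE x in (gauss_space N :: (nat \<times> 'n \<times> bool \<Rightarrow> real) measure). x i0 \<noteq> g x"
    unfolding gauss_space_eq
    apply (rule null_coord_eq)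
    using j gm gi by (auto simp: i0_def gauss_space_eq)
  thus ?thesis
  proof (rule eventually_mono)
    fix x :: "nat \<times> 'n \<times> bool \<Rightarrow> real"
    assume ne: "x i0 \<noteq> g x"
    show "cdot (col x j) w \<noteq> 0"
    proof
      assume z: "cdot (col x j) w = 0"
      have "cdot (col x j) w = cnj (col x j $ k0) * w $ k0 + (\<Sum>k\<in>UNIV - {k0}. cnj (col x j $ k) * w $ k)"
        unfolding cdot_def by (simp add: sum.remove)
      also have "(\<Sum>k\<in>UNIV - {k0}. cnj (col x j $ k) * w $ k) = (\<Sum>k\<in>UNIV - {k0}. (of_real (x (j, k, True)) - \<i> * of_real (x (j, k, False))) * w $ k)"
        by (intro sum.cong) (auto simp: col_def complex_eq_iff)
      also have "cnj (col x j $ k0) = of_real (x i0) + (- \<i> * of_real (x (j, k0, False)))"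
        by (simp add: col_def i0_def complex_eq_iff)
      finally have "of_real (x i0) * w $ k0 + T x = 0" using z
        by (simp add: T_def algebra_simps)
      hence "of_real (x i0) = - T x / w $ k0" using k0
        by (simp add: field_simps add_eq_0_iff)
      hence "x i0 = g x" unfolding g_def by (metis Re_complex_of_real)
      with ne show False by simp
    qed
  qed
qed


lemma cdot_add_right: "cdot a (x + y) = cdot a x + cdot a y"
  by (simp add: cdot_def sum.distrib distrib_left)
lemma cdot_add_left: "cdot (x + y) a = cdot x a + cdot y a"
  by (simp add: cdot_def sum.distrib distrib_right)
lemma cdot_diff_right: "cdot a (x - y) = cdot a x - cdot a y"
  by (simp add: cdot_def sum_subtractf right_diff_distrib)
lemma cdot_diff_left: "cdot (x - y) a = cdot x a - cdot y a"
  by (simp add: cdot_def sum_subtractf left_diff_distrib)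
lemma cdot_smult_right: "cdot a (c *s x) = c * cdot a x"
  by (simp add: cdot_def sum_distrib_left algebra_simps)
lemma cdot_smult_left: "cdot (c *s x) a = cnj c * cdot x a"
  by (simp add: cdot_def sum_distrib_left algebra_simps)
lemma cdot_scaleR_right: "cdot a (t *\<^sub>R x) = of_real t * cdot a x"
  unfolding cdot_def sum_distrib_left
  apply (intro sum.cong refl) apply (subst vector_scaleR_component) by (simp add: scaleR_conv_of_real)
lemma cdot_scaleR_left: "cdot (t *\<^sub>R x) a = of_real t * cdot x a"
  unfolding cdot_def sum_distrib_left
  apply (intro sum.cong refl) apply (subst vector_scaleR_component) by (simp add: scaleR_conv_of_real)
lemma cdot_zero_right[simp]: "cdot a 0 = 0" by (simp add: cdot_def)
lemma cdot_zero_left[simp]: "cdot 0 a = 0" by (simp add: cdot_def)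
lemma cdot_cnj: "cnj (cdot a x) = cdot x a"
  by (simp add: cdot_def mult.commute)
lemma cdot_self: "cdot x x = of_real ((norm x)\<^sup>2)"
proof -
  have "(norm x)\<^sup>2 = (\<Sum>k\<in>UNIV. (cmod (x $ k))\<^sup>2)"
    by (simp add: norm_vec_def L2_set_def sum_nonneg)
  moreover have "cdot x x = (\<Sum>k\<in>UNIV. of_real ((cmod (x $ k))\<^sup>2))"
    unfolding cdot_def by (intro sum.cong refl) (metis complex_norm_square mult.commute)
  ultimately show ?thesis by simp
qed
lemma norm_smult: "norm (c *s (x :: complex^'n)) = cmod c * norm x"
  unfolding norm_vec_def by (simp add: L2_set_right_distrib norm_mult)

definition S :: "(nat \<Rightarrow> complex^'n) \<Rightarrow> nat set \<Rightarrow> complex^'n \<Rightarrow> complex^'n \<Rightarrow> complex" where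
  "S a I u v = (\<Sum>i\<in>I. cnj (cdot (a i) u) * cdot (a i) v)"
definition Qg :: "(nat \<Rightarrow> complex^'n) \<Rightarrow> nat set \<Rightarrow> complex^'n \<Rightarrow> real" where
  "Qg a I u = (\<Sum>i\<in>I. (cmod (cdot (a i) u))\<^sup>2)"

lemma S_self: "S a I u u = of_real (Qg a I u)"
  unfolding S_def Qg_def of_real_sum
  by (intro sum.cong refl) (metis complex_norm_square mult.commute)
lemma Qg_nonneg: "Qg a I u \<ge> 0" unfolding Qg_def by (simp add: sum_nonneg)
lemma S_cnj: "cnj (S a I u v) = S a I v u"
  unfolding S_def by (simp add: mult.commute)
lemma S_add_right: "S a I u (x + y) = S a I u x + S a I u y"
  unfolding S_def by (simp add: cdot_add_right distrib_left sum.distrib)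
lemma S_add_left: "S a I (x + y) u = S a I x u + S a I y u"
  unfolding S_def by (simp add: cdot_add_right distrib_right sum.distrib)
lemma S_smult_right: "S a I u (c *s x) = c * S a I u x"
  unfolding S_def by (simp add: cdot_smult_right sum_distrib_left algebra_simps)
lemma S_smult_left: "S a I (c *s x) u = cnj c * S a I x u"
  unfolding S_def by (simp add: cdot_smult_right sum_distrib_left algebra_simps)
lemma S_scaleR_right: "S a I u (t *\<^sub>R x) = of_real t * S a I u x"
  unfolding S_def by (simp add: cdot_scaleR_right sum_distrib_left algebra_simps)
lemma S_scaleR_left: "S a I (t *\<^sub>R x) u = of_real t * S a I x u"
  unfolding S_def by (simp add: cdot_scaleR_right sum_distrib_left algebra_simps)
lemma Qg_scaleR: "Qg a I (t *\<^sub>R x) = t\<^sup>2 * Qg a I x"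
  unfolding Qg_def by (simp add: cdot_scaleR_right sum_distrib_left power_mult_distrib norm_mult)
lemma Qg_zero[simp]: "Qg a I 0 = 0" unfolding Qg_def by simp



lemma quad_zero:
  fixes p q :: real
  assumes h: "\<And>t. 0 \<le> 2*t*p + t\<^sup>2*q" and q: "q \<ge> 0"
  shows "p = 0"
proof (rule ccontr)
  assume p: "p \<noteq> 0"
  define t where "t = - p / (q + 1)"
  have q1: "q + 1 > 0" using q by simp
  have tp: "p = - t*(q+1)" unfolding t_def using q1 by simp
  have t0: "t \<noteq> 0" using p tp by auto
  have "2*t*p + t\<^sup>2*q = - (t\<^sup>2 * (q + 2))"
    unfolding tp by (simp add: algebra_simps power2_eq_square)
  also have "\<dots> < 0" using t0 q by (simp add: add_pos_nonneg)
  finally show False using h[of t] by simp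
qed

lemma Qg_expand:
  "Qg a I (x + t *\<^sub>R y) = Qg a I x + 2*t*Re (S a I x y) + t\<^sup>2 * Qg a I y"
proof -
  have "of_real (Qg a I (x + t *\<^sub>R y)) = S a I (x + t *\<^sub>R y) (x + t *\<^sub>R y)" by (simp add: S_self)
  also have "\<dots> = S a I x x + of_real t * S a I x y + of_real t * S a I y x + of_real t * of_real t * S a I y y"
    by (simp add: S_add_left S_add_right S_scaleR_left S_scaleR_right algebra_simps)
  finally have "Qg a I (x + t *\<^sub>R y) = Re (S a I x x + of_real t * S a I x y + of_real t * S a I y x + of_real t * of_real t * S a I y y)"
    by (metis Re_complex_of_real)
  also have "\<dots> = Qg a I x + 2*t*Re (S a I x y) + t\<^sup>2 * Qg a I y"
    using S_cnj[of a I y x] by (simp add: S_self power2_eq_square) (metis cnj.sel(1))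
  finally show ?thesis .
qed

lemma norm_expand:
  "(norm (x + t *\<^sub>R y))\<^sup>2 = (norm x)\<^sup>2 + 2*t*Re (cdot x y) + t\<^sup>2 * (norm y)\<^sup>2"
proof -
  have "of_real ((norm (x + t *\<^sub>R y))\<^sup>2) = cdot (x + t *\<^sub>R y) (x + t *\<^sub>R y)" by (simp add: cdot_self)
  also have "\<dots> = cdot x x + of_real t * cdot x y + of_real t * cdot y x + of_real t * of_real t * cdot y y"
    by (simp add: cdot_add_left cdot_add_right cdot_scaleR_left cdot_scaleR_right algebra_simps)
  finally have "(norm (x + t *\<^sub>R y))\<^sup>2 = Re (cdot x x + of_real t * cdot x y + of_real t * cdot y x + of_real t * of_real t * cdot y y)"
    by (metis Re_complex_of_real)
  also have "\<dots> = (norm x)\<^sup>2 + 2*t*Re (cdot x y) + t\<^sup>2 * (norm y)\<^sup>2"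
    using cdot_cnj[of y x] by (simp add: cdot_self power2_eq_square) (metis cnj.sel(1))
  finally show ?thesis .
qed

lemma stepA:
  assumes min: "\<forall>y. norm y = 1 \<longrightarrow> Qg a I x \<le> Qg a I y"
  shows "Qg a I x * (norm y)\<^sup>2 \<le> Qg a I y"
proof (cases "y = 0")
  case True thus ?thesis by simp
next
  case False
  hence n: "norm y > 0" by simp
  have "norm ((1 / norm y) *\<^sub>R y) = 1" using n by simp
  hence "Qg a I x \<le> Qg a I ((1 / norm y) *\<^sub>R y)" using min by blast
  also have "\<dots> = Qg a I y / (norm y)\<^sup>2" by (simp add: Qg_scaleR power_divide)
  finally show ?thesis using n by (simp add: field_simps)
qed

lemma stepB:
  assumes min: "\<forall>y. norm y = 1 \<longrightarrow> Qg a I x \<le> Qg a I y" and nx: "norm x = 1"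
  shows "S a I x y = of_real (Qg a I x) * cdot x y"
proof -
  let ?l = "Qg a I x"
  have re: "Re (S a I x y - of_real ?l * cdot x y) = 0" for y
  proof -
    have "0 \<le> 2*t*Re (S a I x y - of_real ?l * cdot x y) + t\<^sup>2 * (Qg a I y - ?l * (norm y)\<^sup>2)" for t
    proof -
      have "?l * (norm (x + t *\<^sub>R y))\<^sup>2 \<le> Qg a I (x + t *\<^sub>R y)" by (rule stepA[OF min])
      thus ?thesis unfolding Qg_expand norm_expand nx by (simp add: algebra_simps)
    qed
    moreover have "Qg a I y - ?l * (norm y)\<^sup>2 \<ge> 0" using stepA[OF min, of y] by simp
    ultimately show ?thesis by (rule quad_zero)
  qed
  have "Re (S a I x (\<i> *s y) - of_real ?l * cdot x (\<i> *s y)) = 0" by (rule re)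
  hence "Im (S a I x y - of_real ?l * cdot x y) = 0"
    by (simp add: S_smult_right cdot_smult_right)
  with re[of y] show ?thesis by (simp add: complex_eq_iff)
qed



lemma frob_sq:
  assumes n0: "norm x0 = 1" and n: "norm x = 1"
  shows "(frob_diff x0 x)\<^sup>2 = 2 - 2 * (cmod (cdot x0 x))\<^sup>2"
proof -
  let ?T = "\<Sum>k\<in>UNIV. \<Sum>l\<in>UNIV. (cmod (x0 $ k * cnj (x0 $ l) - x $ k * cnj (x $ l)))\<^sup>2"
  have T: "(frob_diff x0 x)\<^sup>2 = ?T" unfolding frob_diff_def
    by (simp add: sum_nonneg)
  have "of_real ?T = (\<Sum>k\<in>UNIV. \<Sum>l\<in>UNIV. (x0 $ k * cnj (x0 $ l) - x $ k * cnj (x $ l)) * cnj (x0 $ k * cnj (x0 $ l) - x $ k * cnj (x $ l)))"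
    unfolding of_real_sum by (intro sum.cong refl) (metis complex_norm_square)
  also have "\<dots> = (\<Sum>k\<in>UNIV. \<Sum>l\<in>UNIV. (cnj (x0 $ k) * x0 $ k) * (cnj (x0 $ l) * x0 $ l)
       - (cnj (x $ k) * x0 $ k) * (cnj (x0 $ l) * x $ l) - (cnj (x0 $ k) * x $ k) * (cnj (x $ l) * x0 $ l)
       + (cnj (x $ k) * x $ k) * (cnj (x $ l) * x $ l))"
    by (intro sum.cong refl) (simp add: algebra_simps)
  also have "\<dots> = cdot x0 x0 * cdot x0 x0 - cdot x x0 * cdot x0 x - cdot x0 x * cdot x x0 + cdot x x * cdot x x"
    unfolding cdot_def sum_product by (simp add: sum.distrib sum_subtractf)
  also have "\<dots> = of_real (2 - 2 * (cmod (cdot x0 x))\<^sup>2)"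
    using n0 n by (simp add: cdot_self cdot_cnj[symmetric, of x0 x] complex_norm_square mult.commute) (metis complex_norm_square of_real_power)
  finally show ?thesis unfolding T using of_real_eq_iff by blast
qed



lemma det:
  fixes a :: "nat \<Rightarrow> complex^'n" and x0 x e :: "complex^'n"
  assumes fin: "finite I" and Ine: "I \<noteq> {}" and n0: "norm x0 = 1" and nx: "norm x = 1"
   and min: "\<forall>y. norm y = 1 \<longrightarrow> Qg a I x \<le> Qg a I y"
   and e0: "cdot e x0 = 0" and ne: "norm e = 1" and ae: "\<forall>i\<in>I. cdot (a i) e \<noteq> 0"
   and ax: "\<forall>i\<in>I. cdot (a i) x0 \<noteq> 0"
  shows "\<exists>xp. cdot xp x0 = 0 \<and> norm xp = 1 \<and> (1/4)*(frob_diff x0 x)\<^sup>2 \<le> Qg a I x0 / Qg a I xp"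
proof -
  define \<alpha> where "\<alpha> = cdot x0 x"
  define r where "r = x - \<alpha> *s x0"
  define \<beta> where "\<beta> = norm r"
  have c00: "cdot x0 x0 = 1" using n0 by (simp add: cdot_self)
  have r0: "cdot x0 r = 0" by (simp add: r_def \<alpha>_def cdot_diff_right cdot_smult_right c00)
  have r0': "cdot r x0 = 0" using r0 cdot_cnj[of x0 r] by simp
  have xdec: "x = \<alpha> *s x0 + r" by (simp add: r_def)
  have "of_real ((norm x)\<^sup>2) = cdot (\<alpha> *s x0 + r) (\<alpha> *s x0 + r)" by (simp add: cdot_self xdec[symmetric])
  also have "\<dots> = cnj \<alpha> * \<alpha> * cdot x0 x0 + cnj \<alpha> * cdot x0 r + \<alpha> * cdot r x0 + cdot r r"
    by (simp add: cdot_add_left cdot_add_right cdot_smult_left cdot_smult_right algebra_simps)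
  also have "\<dots> = of_real ((cmod \<alpha>)\<^sup>2 + \<beta>\<^sup>2)"
    using n0 by (simp add: c00 r0 r0' cdot_self \<beta>_def complex_norm_square mult.commute) (metis complex_norm_square of_real_power)
  finally have pyth: "(cmod \<alpha>)\<^sup>2 + \<beta>\<^sup>2 = 1" using nx of_real_eq_iff by (metis power_one)
  have frob: "(frob_diff x0 x)\<^sup>2 = 2*\<beta>\<^sup>2" using frob_sq[OF n0 nx] pyth unfolding \<alpha>_def by simp
  have Qnn: "\<And>u. 0 \<le> Qg a I x0 / Qg a I u" by (simp add: Qg_nonneg)
  have lb: "Qg a I x \<le> Qg a I x0" using min n0 by blast
  have l0: "0 \<le> Qg a I x" by (rule Qg_nonneg)
  have sqpos: "\<And>u. (\<exists>i\<in>I. cdot (a i) u \<noteq> 0) \<Longrightarrow> Qg a I u > 0"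
  proof -
    fix u assume "\<exists>i\<in>I. cdot (a i) u \<noteq> 0"
    then obtain i where i: "i \<in> I" "cdot (a i) u \<noteq> 0" by blast
    have "0 < (cmod (cdot (a i) u))\<^sup>2" using i by simp
    also have "\<dots> \<le> Qg a I u" unfolding Qg_def
      by (rule member_le_sum) (use i fin in auto)
    finally show "Qg a I u > 0" .
  qed
  show ?thesis
  proof (cases "\<beta> = 0")
    case True
    thus ?thesis using e0 ne Qnn[of e] frob by auto
  next
    case False
    hence bpos: "\<beta> > 0" unfolding \<beta>_def by simp
    define xp where "xp = (1/\<beta>) *\<^sub>R r"
    have nxp: "norm xp = 1" using bpos by (simp add: xp_def \<beta>_def)
    have xp0: "cdot xp x0 = 0" by (simp add: xp_def cdot_scaleR_left r0')
    have x0xp: "cdot x0 xp = 0" using xp0 cdot_cnj[of xp x0] by simp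
    have xd: "x = \<alpha> *s x0 + \<beta> *\<^sub>R xp" using bpos by (simp add: xp_def xdec)
    define l where "l = Qg a I x"
    define b where "b = Qg a I x0"
    define c where "c = Qg a I xp"
    define z where "z = S a I x0 xp"
    have E1: "S a I x x0 = of_real l * cnj \<alpha>"
      using stepB[OF min nx, of x0] cdot_cnj[of x0 x] by (simp add: l_def \<alpha>_def)
    have E1': "S a I x x0 = cnj \<alpha> * of_real b + of_real \<beta> * cnj z"
      unfolding xd by (simp add: S_add_left S_smult_left S_scaleR_left S_self b_def z_def S_cnj)
    have cxxp: "cdot x xp = of_real \<beta>"
      unfolding xd using nxp by (simp add: cdot_add_left cdot_smult_left cdot_scaleR_left x0xp cdot_self)
    have E2: "S a I x xp = of_real l * of_real \<beta>"
      using stepB[OF min nx, of xp] cxxp by (simp add: l_def)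
    have E2': "S a I x xp = cnj \<alpha> * z + of_real \<beta> * of_real c"
      unfolding xd by (simp add: S_add_left S_smult_left S_scaleR_left S_self c_def z_def)
    have F1: "of_real \<beta> * cnj z = cnj \<alpha> * (of_real l - of_real b)"
      using E1 E1' by (simp add: algebra_simps)
    have F1': "of_real \<beta> * z = \<alpha> * (of_real l - of_real b)"
      using arg_cong[OF F1, of cnj] by simp
    have "cnj \<alpha> * (of_real \<beta> * z) + of_real (\<beta>\<^sup>2 * c) = of_real (l * \<beta>\<^sup>2)"
      using E2 E2' by (simp add: algebra_simps power2_eq_square) (metis distrib_left mult.assoc mult.commute)
    hence P: "(cnj \<alpha> * \<alpha>) * (of_real l - of_real b) + of_real (\<beta>\<^sup>2 * c) = of_real (l * \<beta>\<^sup>2)"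
      unfolding F1' by (simp add: mult.assoc)
    have cc: "cnj \<alpha> * \<alpha> = of_real ((cmod \<alpha>)\<^sup>2)" by (metis complex_norm_square mult.commute)
    have "of_real ((cmod \<alpha>)\<^sup>2 * (l - b) + \<beta>\<^sup>2 * c) = (of_real (l * \<beta>\<^sup>2) :: complex)"
      using P[unfolded cc] by simp
    hence key: "(cmod \<alpha>)\<^sup>2 * (l - b) + \<beta>\<^sup>2 * c = l * \<beta>\<^sup>2" using of_real_eq_iff by blast
    have b2le1: "\<beta>\<^sup>2 \<le> 1" using pyth by (smt (verit) zero_le_power2)
    have lb': "l \<le> b" and l0': "0 \<le> l" using lb l0 by (simp_all add: l_def b_def)
    have bc: "\<beta>\<^sup>2 * c \<le> b"
    proof -
      have "\<beta>\<^sup>2 * c = l * \<beta>\<^sup>2 + (1 - \<beta>\<^sup>2) * (b - l)" 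
      proof -
        have A: "(cmod \<alpha>)\<^sup>2 = 1 - \<beta>\<^sup>2" using pyth by simp
        show ?thesis using key[unfolded A] by (simp add: algebra_simps)
      qed
      also have "\<dots> \<le> b"
      proof (cases "2*l - b \<ge> 0")
        case True
        have "\<beta>\<^sup>2 * (2*l - b) \<le> 1 * (2*l - b)" by (rule mult_right_mono[OF b2le1 True])
        thus ?thesis using lb' by (simp add: algebra_simps)
      next
        case False
        have "\<beta>\<^sup>2 * (2*l - b) \<le> 0" using False by (simp add: mult_nonneg_nonpos)
        thus ?thesis using l0' by (simp add: algebra_simps)
      qed
      finally show ?thesis .
    qed
    show ?thesis
    proof (cases "c > 0")
      case True
      have "(1/4)*(frob_diff x0 x)\<^sup>2 \<le> \<beta>\<^sup>2" using frob by simp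
      also have "\<dots> \<le> b / c" using bc True by (simp add: field_simps)
      finally show ?thesis using nxp xp0 unfolding b_def c_def by blast
    next
      case False
      hence c0: "c = 0" using Qg_nonneg[of a I xp] by (simp add: c_def)
      have axp: "\<forall>i\<in>I. cdot (a i) xp = 0"
      proof (rule ccontr)
        assume "\<not> (\<forall>i\<in>I. cdot (a i) xp = 0)"
        hence "c > 0" using sqpos unfolding c_def by blast
        with c0 show False by simp
      qed
      have bp: "b > 0" unfolding b_def using sqpos ax Ine by blast
      define Qe where "Qe = Qg a I e"
      have Qep: "Qe > 0" unfolding Qe_def using sqpos ae Ine by blast
      define s where "s = min (1/2) (sqrt (b / (2*Qe)))"
      have sp: "s > 0" unfolding s_def using bp Qep by simp
      have sh: "s \<le> 1/2" unfolding s_def by simp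
      have ss: "s\<^sup>2 \<le> b / (2*Qe)"
      proof -
        have "s \<le> sqrt (b / (2*Qe))" unfolding s_def by simp
        hence "s\<^sup>2 \<le> (sqrt (b / (2*Qe)))\<^sup>2" using sp by (simp add: power_mono)
        thus ?thesis using bp Qep by simp
      qed
      define v where "v = xp + s *\<^sub>R e"
      have v0: "cdot v x0 = 0" by (simp add: v_def cdot_add_left cdot_scaleR_left xp0 e0)
      have Sxe: "S a I xp e = 0" unfolding S_def using axp by simp
      have Qv: "Qg a I v = s\<^sup>2 * Qe" unfolding v_def Qg_expand Sxe Qe_def
        using c0 by (simp add: c_def)
      have "norm xp - norm (s *\<^sub>R e) \<le> norm v" unfolding v_def by (rule norm_diff_ineq)
      hence nv: "norm v \<ge> 1/2" using nxp ne sp sh by simp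
      define xq where "xq = (1 / norm v) *\<^sub>R v"
      have nvp: "norm v > 0" using nv by linarith
      have nxq: "norm xq = 1" using nvp by (simp add: xq_def)
      have xq0: "cdot xq x0 = 0" by (simp add: xq_def cdot_scaleR_left v0)
      have Qxq: "Qg a I xq = s\<^sup>2 * Qe / (norm v)\<^sup>2"
        by (simp add: xq_def Qg_scaleR Qv power_divide)
      have Qxqp: "Qg a I xq > 0" unfolding Qxq using sp Qep nvp by (simp add: divide_pos_pos)
      have "(norm v)\<^sup>2 \<ge> (1/2)\<^sup>2" using nv by (rule power_mono) simp
      hence "Qg a I xq \<le> s\<^sup>2 * Qe / (1/2)\<^sup>2" unfolding Qxq
        using sp Qep nvp by (intro divide_left_mono) auto
      also have "\<dots> = 4 * (s\<^sup>2 * Qe)" by (simp add: power2_eq_square)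
      also have "\<dots> \<le> 4 * (b / (2*Qe) * Qe)" using ss Qep by (simp add: field_simps)
      also have "\<dots> = 2 * b" using Qep by simp
      finally have Qle: "Qg a I xq \<le> 2 * b" .
      have "(1/4)*(frob_diff x0 x)\<^sup>2 \<le> 1/2" using frob b2le1 by simp
      also have "\<dots> \<le> b / Qg a I xq" using Qle Qxqp bp by (simp add: field_simps)
      finally show ?thesis using nxq xq0 unfolding b_def by blast
    qed
  qed
qed



lemma exists_perp:
  fixes x0 :: "complex^'n"
  assumes "CARD('n) \<ge> 2" and "norm x0 = 1"
  shows "\<exists>e. cdot e x0 = 0 \<and> norm e = 1"
proof -
  have "x0 \<noteq> 0" using assms by auto
  then obtain k1 where k1: "x0 $ k1 \<noteq> 0" by (metis vec_eq_iff zero_index)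
  have "UNIV \<noteq> {k1}"
  proof
    assume u: "UNIV = {k1}"
    have "CARD('n) = card {k1}" by (subst u) (rule refl)
    hence "CARD('n) = 1" by simp
    with assms(1) show False by simp
  qed
  then obtain k2 where k2: "k2 \<noteq> k1" by auto
  define e' where "e' = (\<chi> k. if k = k1 then cnj (x0 $ k2) else if k = k2 then - cnj (x0 $ k1) else 0)"
  have "cdot e' x0 = (\<Sum>k\<in>UNIV. (if k = k1 then x0 $ k2 * x0 $ k1 else 0) + (if k = k2 then - (x0 $ k1 * x0 $ k2) else 0))"
    unfolding cdot_def e'_def using k2 by (intro sum.cong refl) auto
  also have "\<dots> = 0" by (simp add: sum.distrib mult.commute)
  finally have e'0: "cdot e' x0 = 0" .
  have "e' $ k2 \<noteq> 0" using k1 k2 by (simp add: e'_def)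
  hence "e' \<noteq> 0" by auto
  hence np: "norm e' > 0" by simp
  show ?thesis
    by (rule exI[of _ "(1 / norm e') *\<^sub>R e'"]) (use np e'0 in \<open>simp add: cdot_scaleR_left\<close>)
qed

theorem proposition1:
  fixes x0 :: "complex^'n" and N :: nat
  assumes "CARD('n) \<ge> 2" and "norm x0 = 1"
  shows "AE \<omega> in gauss_space N.
    \<forall>I xnull.
      (I \<subseteq> {..<N} \<and> I \<noteq> {} \<and>
       (\<forall>i\<in>I. \<forall>j\<in>{..<N} - I. bvec \<omega> x0 i \<le> bvec \<omega> x0 j) \<and>
       norm xnull = norm x0 \<and>
       (\<forall>x. norm x = norm x0 \<longrightarrow> AIx_sq \<omega> I xnull \<le> AIx_sq \<omega> I x))
      \<longrightarrow> (\<exists>xp. cdot xp x0 = 0 \<and> norm xp = norm x0 \<and>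
             (1/4) * (frob_diff x0 xnull)\<^sup>2
               \<le> (\<Sum>i\<in>I. (bvec \<omega> x0 i)\<^sup>2) / AIx_sq \<omega> I xp)"
proof -
  obtain e where e0: "cdot e x0 = 0" and ne: "norm e = 1" using exists_perp[OF assms] by blast
  have enz: "e \<noteq> 0" using ne by auto
  have x0nz: "x0 \<noteq> 0" using assms by auto
  have "AE w in gauss_space N. \<forall>j\<in>{..<N}. cdot (col w j) e \<noteq> 0 \<and> cdot (col w j) x0 \<noteq> 0"
    by (rule AE_finite_allI) (auto intro: AE_cdot_nonzero[OF enz] AE_cdot_nonzero[OF x0nz])
  thus ?thesis
  proof (rule eventually_mono)
    fix w assume G: "\<forall>j\<in>{..<N}. cdot (col w j) e \<noteq> 0 \<and> cdot (col w j) x0 \<noteq> 0"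
    show "\<forall>I xnull.
      (I \<subseteq> {..<N} \<and> I \<noteq> {} \<and>
       (\<forall>i\<in>I. \<forall>j\<in>{..<N} - I. bvec w x0 i \<le> bvec w x0 j) \<and>
       norm xnull = norm x0 \<and>
       (\<forall>x. norm x = norm x0 \<longrightarrow> AIx_sq w I xnull \<le> AIx_sq w I x))
      \<longrightarrow> (\<exists>xp. cdot xp x0 = 0 \<and> norm xp = norm x0 \<and>
             (1/4) * (frob_diff x0 xnull)\<^sup>2
               \<le> (\<Sum>i\<in>I. (bvec w x0 i)\<^sup>2) / AIx_sq w I xp)"
    proof (intro allI impI)
      fix I xnull
      assume H: "I \<subseteq> {..<N} \<and> I \<noteq> {} \<and>
       (\<forall>i\<in>I. \<forall>j\<in>{..<N} - I. bvec w x0 i \<le> bvec w x0 j) \<and>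
       norm xnull = norm x0 \<and>
       (\<forall>x. norm x = norm x0 \<longrightarrow> AIx_sq w I xnull \<le> AIx_sq w I x)"
      have AQ: "\<And>u. AIx_sq w I u = Qg (col w) I u" by (simp add: AIx_sq_def Qg_def)
      have fin: "finite I" using H finite_subset by blast
      have "\<exists>xp. cdot xp x0 = 0 \<and> norm xp = 1 \<and> (1/4)*(frob_diff x0 xnull)\<^sup>2 \<le> Qg (col w) I x0 / Qg (col w) I xp"
      proof (rule det[OF fin])
        show "I \<noteq> {}" using H by blast
        show "norm x0 = 1" by (rule assms(2))
        show "norm xnull = 1" using H assms(2) by simp
        show "\<forall>y. norm y = 1 \<longrightarrow> Qg (col w) I xnull \<le> Qg (col w) I y" using H assms(2) unfolding AQ by simp
        show "cdot e x0 = 0" "norm e = 1" by (fact e0, fact ne)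
        show "\<forall>i\<in>I. cdot (col w i) e \<noteq> 0" using H G by blast
        show "\<forall>i\<in>I. cdot (col w i) x0 \<noteq> 0" using H G by blast
      qed
      moreover have "(\<Sum>i\<in>I. (bvec w x0 i)\<^sup>2) = Qg (col w) I x0" by (simp add: bvec_def Qg_def)
      ultimately show "\<exists>xp. cdot xp x0 = 0 \<and> norm xp = norm x0 \<and>
             (1/4) * (frob_diff x0 xnull)\<^sup>2
               \<le> (\<Sum>i\<in>I. (bvec w x0 i)\<^sup>2) / AIx_sq w I xp"
        using assms(2) by (simp add: AQ)
    qed
  qed
qed

end
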